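(* Let $p\in P_i$ be a right link state of a rook-Brauer $n$-diagram with exactly $i$ defects, and let $d_p\in\mathcal{RB}_n(\delta,\varepsilon)$ be the diagram defined by: if $\bar a$ is isolated in $p$ then $a$ and $\bar a$ are isolated in $d_p$; if $\bar a,\bar b$ are joined by a non-propagating edge in $p$ then $d_p$ has non-propagating edges $\{a,b\}$ and $\{\bar a,\bar b\}$; if $p$ has a defect at $\bar a$ then $d_p$ has the propagating edge $\{a,\bar a\}$. If $y$ is a diagram in $J_p$, then $yd_p=\delta^{\alpha}\varepsilon^{\beta}y$, where $\alpha$ is the number of non-propagating edges in $p$ and $\beta$ is the number of isolated vertices in $p$.
   Context: Let $k$ be a unital commutative ring, $n$ a positive integer, $\delta,\varepsilon\in k$. A rook-Brauer $n$-diagram is a graph on vertices $1,\dots,n$ (left column, top to bottom) and $\bar1,\dots,\bar n$ (right column) in which each edge joins two distinct vertices and each vertex lies on at most one edge; diagrams are determined by which pairs are joined. Edges joining the two columns are propagating, edges within one column non-propagating, vertices on no edge isolated. $\mathcal{RB}_n(\delta,\varepsilon)$ is the free $k$-module on these diagrams with product: identify the right column of $d_1$ with the left column of $d_2$ (middle column); let $\alpha'$ be the number of closed loops lying in the middle column and $\beta'$ the number of other connected components lying entirely in the middle column (isolated middle vertices, or paths with both ends in the middle column); let $d_3$ join two outer vertices iff they are joined by a path; $d_1d_2=\delta^{\alpha'}\varepsilon^{\beta'} d_3$. The right link state of a diagram records, for each right vertex $\bar a$, whether it lies on a propagating edge (a defect at $\bar a$), is joined by a non-propagating edge to a specified $\bar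 b$, or is isolated. $P_i$ is the set of right link states of rook-Brauer $n$-diagrams with exactly $i$ defects. A splice replaces two defects by a non-propagating edge joining their vertices; a deletion replaces a defect by an isolated vertex. $J_p$ is the left ideal of $\mathcal{RB}_n(\delta,\varepsilon)$ spanned by the diagrams whose right link state is obtained from $p$ by a (possibly empty) sequence of splices and deletions. *)

theory Defs
  imports Main
begin

text \<open>Vertices: left column \<open>Lv a\<close> and right column \<open>Rv a\<close> (written \<open>\<bar>a\<close> in the paper),
  for \<open>a \<in> {1..n}\<close>.\<close>

datatype vert = Lv nat | Rv nat

definition verts :: "nat \<Rightarrow> vert set" where
  "verts n = Lv ` {1..n} \<union> Rv ` {1..n}"

definition rb_diagram :: "nat \<Rightarrow> vert set set \<Rightarrow> bool" where
  "rb_diagram n D \<longleftrightarrow>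
     (\<forall>e\<in>D. \<exists>u v. e = {u, v} \<and> u \<noteq> v \<and> u \<in> verts n \<and> v \<in> verts n) \<and>
     (\<forall>e\<in>D. \<forall>e'\<in>D. e \<inter> e' \<noteq> {} \<longrightarrow> e = e')"

text \<open>Stacking: vertices of the three columns are pairs (column, index), column 0 = left of d1,
  column 1 = middle, column 2 = right of d2. Edges of d1 and d2 are kept separately
  (multigraph), so parallel middle edges form a closed loop.\<close>

fun emb1 :: "vert \<Rightarrow> nat \<times> nat" where
  "emb1 (Lv a) = (0, a)" | "emb1 (Rv a) = (1, a)"

fun emb2 :: "vert \<Rightarrow> nat \<times> nat" where
  "emb2 (Lv a) = (1, a)" | "emb2 (Rv a) = (2, a)"

definition adj1 :: "vert set set \<Rightarrow> nat \<times> nat \<Rightarrow> nat \<times> nat \<Rightarrow> bool" where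
  "adj1 d1 x y \<longleftrightarrow> (\<exists>e\<in>d1. emb1 ` e = {x, y} \<and> x \<noteq> y)"

definition adj2 :: "vert set set \<Rightarrow> nat \<times> nat \<Rightarrow> nat \<times> nat \<Rightarrow> bool" where
  "adj2 d2 x y \<longleftrightarrow> (\<exists>e\<in>d2. emb2 ` e = {x, y} \<and> x \<noteq> y)"

definition conn :: "vert set set \<Rightarrow> vert set set \<Rightarrow> nat \<times> nat \<Rightarrow> nat \<times> nat \<Rightarrow> bool" where
  "conn d1 d2 = (\<lambda>x y. adj1 d1 x y \<or> adj2 d2 x y)\<^sup>*\<^sup>*"

definition verts3 :: "nat \<Rightarrow> (nat \<times> nat) set" where
  "verts3 n = {0, 1, 2} \<times> {1..n}"

definition middle :: "nat \<Rightarrow> (nat \<times> nat) set" where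
  "middle n = {1} \<times> {1..n}"

definition components :: "nat \<Rightarrow> vert set set \<Rightarrow> vert set set \<Rightarrow> (nat \<times> nat) set set" where
  "components n d1 d2 = {{y \<in> verts3 n. conn d1 d2 x y} | x. x \<in> verts3 n}"

text \<open>Closed loops in the middle column: middle components in which every vertex lies on an edge
  of d1 and on an edge of d2 (degree 2). The other middle components (isolated vertices and
  paths with both ends in the middle column) are counted by \<open>beta'\<close>.\<close>

definition loops_mid :: "nat \<Rightarrow> vert set set \<Rightarrow> vert set set \<Rightarrow> (nat \<times> nat) set set" where
  "loops_mid n d1 d2 = {C \<in> components n d1 d2. C \<subseteq> middle n \<and>
      (\<forall>x\<in>C. (\<exists>y. adj1 d1 x y) \<and> (\<exists>y. adj2 d2 x y))}"

definition other_mid :: "nat \<Rightarrow> vert set set \<Rightarrow> vert set set \<Rightarrow> (nat \<times> nat) set set" where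
  "other_mid n d1 d2 = {C \<in> components n d1 d2. C \<subseteq> middle n \<and>
      \<not> (\<forall>x\<in>C. (\<exists>y. adj1 d1 x y) \<and> (\<exists>y. adj2 d2 x y))}"

fun outer :: "vert \<Rightarrow> nat \<times> nat" where
  "outer (Lv a) = (0, a)" | "outer (Rv a) = (2, a)"

definition comp_diagram :: "nat \<Rightarrow> vert set set \<Rightarrow> vert set set \<Rightarrow> vert set set" where
  "comp_diagram n d1 d2 = {{u, v} | u v. u \<in> verts n \<and> v \<in> verts n \<and> u \<noteq> v \<and>
      conn d1 d2 (outer u) (outer v)}"

text \<open>Elements of the free \<open>k\<close>-module are coefficient functions on diagrams; the product of
  basis diagrams \<open>d1 d2 = \<delta>^\<alpha>' \<epsilon>^\<beta>' d3\<close>.\<close>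

definition rb_prod :: "nat \<Rightarrow> 'k::comm_ring_1 \<Rightarrow> 'k \<Rightarrow> vert set set \<Rightarrow> vert set set \<Rightarrow> (vert set set \<Rightarrow> 'k)" where
  "rb_prod n \<delta> \<epsilon> d1 d2 = (\<lambda>d. if d = comp_diagram n d1 d2
      then \<delta> ^ card (loops_mid n d1 d2) * \<epsilon> ^ card (other_mid n d1 d2) else 0)"

definition basis_elt :: "vert set set \<Rightarrow> 'k::comm_ring_1 \<Rightarrow> (vert set set \<Rightarrow> 'k)" where
  "basis_elt d c = (\<lambda>d'. if d' = d then c else 0)"

datatype lstate = Defect | Joined nat | Isol

definition rls :: "vert set set \<Rightarrow> nat \<Rightarrow> lstate" where
  "rls d a = (if \<exists>b. {Lv b, Rv a} \<in> d then Defect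
              else if \<exists>b. b \<noteq> a \<and> {Rv a, Rv b} \<in> d then Joined (THE b. b \<noteq> a \<and> {Rv a, Rv b} \<in> d)
              else Isol)"

definition num_defects :: "(nat \<Rightarrow> lstate) \<Rightarrow> nat" where
  "num_defects p = card {a. p a = Defect}"

definition P :: "nat \<Rightarrow> nat \<Rightarrow> (nat \<Rightarrow> lstate) set" where
  "P n i = {rls d | d. rb_diagram n d \<and> num_defects (rls d) = i}"

definition splice :: "(nat \<Rightarrow> lstate) \<Rightarrow> (nat \<Rightarrow> lstate) \<Rightarrow> bool" where
  "splice p q \<longleftrightarrow> (\<exists>a b. a \<noteq> b \<and> p a = Defect \<and> p b = Defect \<and> q = p(a := Joined b, b := Joined a))"

definition deletion :: "(nat \<Rightarrow> lstate) \<Rightarrow> (nat \<Rightarrow> lstate) \<Rightarrow> bool" where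
  "deletion p q \<longleftrightarrow> (\<exists>a. p a = Defect \<and> q = p(a := Isol))"

definition J :: "nat \<Rightarrow> (nat \<Rightarrow> lstate) \<Rightarrow> vert set set set" where
  "J n p = {y. rb_diagram n y \<and> (\<lambda>q q'. splice q q' \<or> deletion q q')\<^sup>*\<^sup>* p (rls y)}"

definition d_of :: "nat \<Rightarrow> (nat \<Rightarrow> lstate) \<Rightarrow> vert set set" where
  "d_of n p = {{Lv a, Rv a} | a. a \<in> {1..n} \<and> p a = Defect}
            \<union> {{Lv a, Lv b} | a b. a \<in> {1..n} \<and> p a = Joined b}
            \<union> {{Rv a, Rv b} | a b. a \<in> {1..n} \<and> p a = Joined b}"

definition np_edges :: "nat \<Rightarrow> (nat \<Rightarrow> lstate) \<Rightarrow> nat set set" where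
  "np_edges n p = {{a, b} | a b. a \<in> {1..n} \<and> p a = Joined b}"

definition isolated :: "nat \<Rightarrow> (nat \<Rightarrow> lstate) \<Rightarrow> nat set" where
  "isolated n p = {a \<in> {1..n}. p a = Isol}"

end

theory Submission
  imports Defs
begin


definition mate :: "vert set set \<Rightarrow> vert \<Rightarrow> vert option" where
  "mate y u = (if \<exists>v. {u,v} \<in> y then Some (THE v. {u,v} \<in> y) else None)"

lemma rb_edge: "rb_diagram n y \<Longrightarrow> {u,v} \<in> y \<Longrightarrow> u \<noteq> v \<and> u \<in> verts n \<and> v \<in> verts n"
proof -
  assume r: "rb_diagram n y" and e: "{u,v} \<in> y"
  have h: "\<forall>e\<in>y. \<exists>u v. e = {u, v} \<and> u \<noteq> v \<and> u \<in> verts n \<and> v \<in> verts n"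
    using r unfolding rb_diagram_def by (rule conjunct1)
  obtain u' v' where "{u,v} = {u',v'}" "u' \<noteq> v'" "u' \<in> verts n" "v' \<in> verts n"
    using bspec[OF h e] by blast
  then show ?thesis unfolding doubleton_eq_iff by blast
qed

lemma rb_uniq: "rb_diagram n y \<Longrightarrow> {u,v} \<in> y \<Longrightarrow> {u,w} \<in> y \<Longrightarrow> v = w"
proof -
  assume r: "rb_diagram n y" and e: "{u,v} \<in> y" "{u,w} \<in> y"
  have h: "\<forall>e\<in>y. \<forall>e'\<in>y. e \<inter> e' \<noteq> {} \<longrightarrow> e = e'"
    using r unfolding rb_diagram_def by (rule conjunct2)
  have "{u,v} = {u,w}" by (rule h[rule_format, OF e(1) e(2)]) simp
  then show ?thesis unfolding doubleton_eq_iff by blast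
qed

lemma mate_Some: "rb_diagram n y \<Longrightarrow> mate y u = Some v \<longleftrightarrow> {u,v} \<in> y"
proof
  assume r: "rb_diagram n y"
  {assume "mate y u = Some v"
  then obtain w where w: "{u,w} \<in> y" and v: "v = (THE v. {u,v} \<in> y)" unfolding mate_def by (auto split: if_splits)
  have "(THE v. {u,v} \<in> y) = w" using w rb_uniq[OF r] by blast
  then show "{u,v} \<in> y" using v w by simp}
  {assume h: "{u,v} \<in> y"
  have "(THE v. {u,v} \<in> y) = v" using h rb_uniq[OF r] by blast
  then show "mate y u = Some v" using h unfolding mate_def by auto}
qed

lemma mate_None: "mate y u = None \<longleftrightarrow> (\<forall>v. {u,v} \<notin> y)"
  unfolding mate_def by auto

lemma rls_mate: assumes r: "rb_diagram n y"
  shows "rls y a = (case mate y (Rv a) of None \<Rightarrow> Isol | Some (Lv c) \<Rightarrow> Defect | Some (Rv b) \<Rightarrow> Joined b)"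
proof (cases "mate y (Rv a)")
  case None
  then have "\<forall>v. {Rv a, v} \<notin> y" by (simp add: mate_None)
  then show ?thesis using None unfolding rls_def by (simp add: insert_commute)
next
  case (Some w)
  then have e: "{Rv a, w} \<in> y" using mate_Some[OF r] by auto
  show ?thesis
  proof (cases w)
    case (Lv c)
    then show ?thesis using e Some unfolding rls_def by (auto simp: insert_commute)
  next
    case (Rv b)
    have nd: "\<not> (\<exists>c. {Lv c, Rv a} \<in> y)" using e Rv rb_uniq[OF r] by (metis insert_commute vert.distinct(1))
    have ba: "b \<noteq> a" using rb_edge[OF r e] Rv by auto
    have "(THE b. b \<noteq> a \<and> {Rv a, Rv b} \<in> y) = b" 
      using e Rv ba rb_uniq[OF r] by (intro the_equality) auto
    then show ?thesis using nd e Rv Some ba unfolding rls_def by auto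
  qed
qed



definition rm :: "(nat \<Rightarrow> nat option) \<Rightarrow> nat \<Rightarrow> nat" where
  "rm M a = (case M a of None \<Rightarrow> a | Some b \<Rightarrow> min a b)"

lemma rm_cases: "rm M x = x \<or> M x = Some (rm M x)"
  by (auto simp: rm_def min_def split: option.splits)

lemma rm_eq: assumes s: "\<And>a b. M a = Some b \<Longrightarrow> M b = Some a" and e: "rm M c = rm M a"
  shows "c = a \<or> M a = Some c"
proof -
  let ?r = "rm M a"
  have 1: "?r = c \<or> M ?r = Some c" using rm_cases[of M c] e s by metis
  have 2: "?r = a \<or> M a = Some ?r" using rm_cases[of M a] .
  show ?thesis
  proof (cases "?r = c")
    case True then show ?thesis using 2 by auto
  next
    case False
    then have m: "M ?r = Some c" using 1 by auto
    show ?thesis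
    proof (cases "?r = a")
      case True then show ?thesis using m by auto
    next
      case False
      then have "M a = Some ?r" using 2 by auto
      then have "M ?r = Some a" using s by blast
      then show ?thesis using m by auto
    qed
  qed
qed

definition matL :: "vert set set \<Rightarrow> nat \<Rightarrow> nat option" where
  "matL y c = (case mate y (Lv c) of Some (Lv c') \<Rightarrow> Some c' | _ \<Rightarrow> None)"
definition matR :: "vert set set \<Rightarrow> nat \<Rightarrow> nat option" where
  "matR y c = (case mate y (Rv c) of Some (Rv c') \<Rightarrow> Some c' | _ \<Rightarrow> None)"
definition matD :: "(nat \<Rightarrow> lstate) \<Rightarrow> nat \<Rightarrow> nat option" where
  "matD p a = (case p a of Joined b \<Rightarrow> Some b | _ \<Rightarrow> None)"

definition rep :: "vert set set \<Rightarrow> (nat \<Rightarrow> lstate) \<Rightarrow> nat \<times> nat \<Rightarrow> nat \<times> nat" where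
  "rep y p x = (if fst x = 0 then (case mate y (Lv (snd x)) of Some (Rv a) \<Rightarrow> (1,a) | _ \<Rightarrow> (0, rm (matL y) (snd x)))
     else if fst x = 1 then (1, rm (matR y) (snd x))
     else if p (snd x) = Defect then (1, rm (matR y) (snd x)) else (2, rm (matD p) (snd x)))"

definition Inv :: "(nat \<Rightarrow> lstate) \<Rightarrow> (nat \<Rightarrow> lstate) \<Rightarrow> bool" where
  "Inv p r \<longleftrightarrow> (\<forall>a b. p a = Joined b \<longrightarrow> r a = Joined b) \<and> (\<forall>a. p a = Isol \<longrightarrow> r a = Isol) \<and>
     (\<forall>a. r a = Defect \<longrightarrow> p a = Defect) \<and>
     (\<forall>a b. r a = Joined b \<longrightarrow> p a = Joined b \<or> (p a = Defect \<and> p b = Defect))"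

lemma Inv_refl: "Inv p p" unfolding Inv_def by auto

lemma Inv_step: assumes "Inv p r" "splice r r' \<or> deletion r r'" shows "Inv p r'"
  using assms(2)
proof
  assume "splice r r'"
  then obtain a b where ab: "a \<noteq> b" "r a = Defect" "r b = Defect" "r' = r(a := Joined b, b := Joined a)"
    unfolding splice_def by blast
  have I: "\<forall>a b. p a = Joined b \<longrightarrow> r a = Joined b" "\<forall>a. p a = Isol \<longrightarrow> r a = Isol"
     "\<forall>a. r a = Defect \<longrightarrow> p a = Defect"
     "\<forall>a b. r a = Joined b \<longrightarrow> p a = Joined b \<or> (p a = Defect \<and> p b = Defect)"
    using assms(1) unfolding Inv_def by blast+
  have pa: "p a = Defect" "p b = Defect" using I(3) ab by auto
  show ?thesis unfolding Inv_def
  proof (intro conjI allI impI)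
    fix c d assume "p c = Joined d" then show "r' c = Joined d" using I(1) ab pa by auto
  next
    fix c assume "p c = Isol" then show "r' c = Isol" using I(2) ab pa by auto
  next
    fix c assume "r' c = Defect" then show "p c = Defect" using I(3) ab pa by (auto split: if_splits)
  next
    fix c d assume "r' c = Joined d" then show "p c = Joined d \<or> (p c = Defect \<and> p d = Defect)"
      using I(4) ab pa by (auto split: if_splits)
  qed
next
  assume "deletion r r'"
  then obtain a where ab: "r a = Defect" "r' = r(a := Isol)"
    unfolding deletion_def by blast
  have I: "\<forall>a b. p a = Joined b \<longrightarrow> r a = Joined b" "\<forall>a. p a = Isol \<longrightarrow> r a = Isol"
     "\<forall>a. r a = Defect \<longrightarrow> p a = Defect"
     "\<forall>a b. r a = Joined b \<longrightarrow> p a = Joined b \<or> (p a = Defect \<and> p b = Defect)"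
    using assms(1) unfolding Inv_def by blast+
  have pa: "p a = Defect" using I(3) ab by auto
  show ?thesis unfolding Inv_def
  proof (intro conjI allI impI)
    fix c d assume "p c = Joined d" then show "r' c = Joined d" using I(1) ab pa by auto
  next
    fix c assume "p c = Isol" then show "r' c = Isol" using I(2) ab pa by auto
  next
    fix c assume "r' c = Defect" then show "p c = Defect" using I(3) ab pa by (auto split: if_splits)
  next
    fix c d assume "r' c = Joined d" then show "p c = Joined d \<or> (p c = Defect \<and> p d = Defect)"
      using I(4) ab pa by (auto split: if_splits)
  qed
qed

lemma Inv_rtc: assumes "(\<lambda>q q'. splice q q' \<or> deletion q q')\<^sup>*\<^sup>* p r" shows "Inv p r"
  using assms by (induction rule: rtranclp_induct) (auto intro: Inv_refl Inv_step)

lemma verts_iff[simp]: "Lv a \<in> verts n \<longleftrightarrow> a \<in> {1..n}" "Rv a \<in> verts n \<longleftrightarrow> a \<in> {1..n}"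
  unfolding verts_def by auto

lemma emb1_inj: "emb1 u = emb1 v \<Longrightarrow> u = v" by (cases u; cases v) auto
lemma emb2_inj: "emb2 u = emb2 v \<Longrightarrow> u = v" by (cases u; cases v) auto
lemma outer_inj: "outer u = outer v \<Longrightarrow> u = v" by (cases u; cases v) auto

lemma adj1_iff: assumes r: "rb_diagram n y"
  shows "adj1 y x z \<longleftrightarrow> (\<exists>u v. {u,v} \<in> y \<and> x = emb1 u \<and> z = emb1 v)"
proof
  assume "adj1 y x z"
  then obtain e where e: "e \<in> y" "emb1 ` e = {x,z}" "x \<noteq> z" unfolding adj1_def by auto
  have h: "\<forall>e\<in>y. \<exists>u v. e = {u, v} \<and> u \<noteq> v \<and> u \<in> verts n \<and> v \<in> verts n"
    using r unfolding rb_diagram_def by (rule conjunct1)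
  obtain u v where uv: "e = {u,v}" using bspec[OF h e(1)] by blast
  then have "{emb1 u, emb1 v} = {x,z}" using e by auto
  then have "(x = emb1 u \<and> z = emb1 v) \<or> (x = emb1 v \<and> z = emb1 u)" by (auto simp: doubleton_eq_iff)
  then show "\<exists>u v. {u,v} \<in> y \<and> x = emb1 u \<and> z = emb1 v" using e uv by (metis insert_commute)
next
  assume "\<exists>u v. {u,v} \<in> y \<and> x = emb1 u \<and> z = emb1 v"
  then obtain u v where uv: "{u,v} \<in> y" "x = emb1 u" "z = emb1 v" by blast
  then have "u \<noteq> v" using rb_edge[OF r] by blast
  then have "x \<noteq> z" using uv emb1_inj by blast
  then show "adj1 y x z" unfolding adj1_def using uv by (intro bexI[of _ "{u,v}"]) auto
qed

lemma adj1_emb: "rb_diagram n y \<Longrightarrow> {u,v} \<in> y \<Longrightarrow> adj1 y (emb1 u) (emb1 v)"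
  using adj1_iff by blast

locale setting =
  fixes n :: nat and y d0 :: "vert set set" and p :: "nat \<Rightarrow> lstate"
  assumes y: "rb_diagram n y" and d0: "rb_diagram n d0" and pd: "p = rls d0"
    and inv: "Inv p (rls y)"
begin

abbreviation "D \<equiv> d_of n p"
abbreviation "A \<equiv> (\<lambda>x z. adj1 y x z \<or> adj2 D x z)"

lemma p_range: "p a \<noteq> Isol \<Longrightarrow> a \<in> {1..n}"
proof -
  assume h: "p a \<noteq> Isol"
  then obtain w where "mate d0 (Rv a) = Some w" using rls_mate[OF d0, of a] pd by (auto split: option.splits)
  then have e: "{Rv a, w} \<in> d0" using mate_Some[OF d0] by auto
  show ?thesis using rb_edge[OF d0 e] by auto
qed

lemma p_sym: "p a = Joined b \<Longrightarrow> p b = Joined a \<and> b \<noteq> a \<and> a \<in> {1..n} \<and> b \<in> {1..n}"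
proof -
  assume h: "p a = Joined b"
  then have "mate d0 (Rv a) = Some (Rv b)" using rls_mate[OF d0, of a] pd by (auto split: option.splits vert.splits)
  then have e: "{Rv a, Rv b} \<in> d0" using mate_Some[OF d0] by auto
  then have "mate d0 (Rv b) = Some (Rv a)" using mate_Some[OF d0] by (simp add: insert_commute)
  then have "p b = Joined a" using rls_mate[OF d0, of b] pd by auto
  then show ?thesis using rb_edge[OF d0 e] by auto
qed

lemma mate_sym: "mate y u = Some v \<Longrightarrow> mate y v = Some u"
  using mate_Some[OF y] by (simp add: insert_commute)

lemma inv1: "p a = Joined b \<Longrightarrow> rls y a = Joined b" using inv unfolding Inv_def by blast
lemma inv2: "p a = Isol \<Longrightarrow> rls y a = Isol" using inv unfolding Inv_def by blast
lemma inv3: "rls y a = Defect \<Longrightarrow> p a = Defect" using inv unfolding Inv_def by blast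
lemma inv4: "rls y a = Joined b \<Longrightarrow> p a = Joined b \<or> (p a = Defect \<and> p b = Defect)"
  using inv unfolding Inv_def by blast

lemma Q1: "p a = Joined b \<Longrightarrow> mate y (Rv a) = Some (Rv b)"
  using inv1[of a b] rls_mate[OF y, of a] by (cases "mate y (Rv a)") (auto split: vert.splits)
lemma Q2: "p a = Isol \<Longrightarrow> mate y (Rv a) = None"
  using inv2[of a] rls_mate[OF y, of a] by (cases "mate y (Rv a)") (auto split: vert.splits)
lemma Q3: "mate y (Rv a) = Some (Lv c) \<Longrightarrow> p a = Defect"
  using inv3[of a] rls_mate[OF y, of a] by simp
lemma Q4: "mate y (Rv a) = Some (Rv b) \<Longrightarrow> p a = Joined b \<or> (p a = Defect \<and> p b = Defect)"
  using inv4[of a b] rls_mate[OF y, of a] by simp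

lemma MR_sym: "matR y a = Some b \<Longrightarrow> matR y b = Some a"
proof -
  assume "matR y a = Some b"
  then have "mate y (Rv a) = Some (Rv b)" by (auto simp: matR_def split: option.splits vert.splits)
  then have "mate y (Rv b) = Some (Rv a)" by (rule mate_sym)
  then show ?thesis by (simp add: matR_def)
qed
lemma matL_sym: "matL y a = Some b \<Longrightarrow> matL y b = Some a"
proof -
  assume "matL y a = Some b"
  then have "mate y (Lv a) = Some (Lv b)" by (auto simp: matL_def split: option.splits vert.splits)
  then have "mate y (Lv b) = Some (Lv a)" by (rule mate_sym)
  then show ?thesis by (simp add: matL_def)
qed
lemma MD_sym: "matD p a = Some b \<Longrightarrow> matD p b = Some a"
proof -
  assume "matD p a = Some b"
  then have "p a = Joined b" by (auto simp: matD_def split: lstate.splits)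
  then have "p b = Joined a" using p_sym by blast
  then show ?thesis by (simp add: matD_def)
qed

lemma adj2_iff: "adj2 D x z \<longleftrightarrow>
   (\<exists>a. p a = Defect \<and> (x = (1,a) \<and> z = (2,a) \<or> x = (2,a) \<and> z = (1,a))) \<or>
   (\<exists>a b. p a = Joined b \<and> (x = (1,a) \<and> z = (1,b) \<or> x = (2,a) \<and> z = (2,b)))"
proof
  assume "adj2 D x z"
  then obtain e where e: "e \<in> D" "emb2 ` e = {x,z}" "x \<noteq> z" unfolding adj2_def by auto
  from e(1) show "(\<exists>a. p a = Defect \<and> (x = (1,a) \<and> z = (2,a) \<or> x = (2,a) \<and> z = (1,a))) \<or>
   (\<exists>a b. p a = Joined b \<and> (x = (1,a) \<and> z = (1,b) \<or> x = (2,a) \<and> z = (2,b)))"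
    unfolding d_of_def
  proof (elim UnE CollectE exE conjE)
    fix a assume "e = {Lv a, Rv a}" "p a = Defect"
    then show ?thesis using e by (auto simp: doubleton_eq_iff)
  next
    fix a b assume h: "e = {Lv a, Lv b}" "p a = Joined b"
    then have "p b = Joined a" using p_sym by blast
    then show ?thesis using e h by (auto simp: doubleton_eq_iff)
  next
    fix a b assume h: "e = {Rv a, Rv b}" "p a = Joined b"
    then have "p b = Joined a" using p_sym by blast
    then show ?thesis using e h by (auto simp: doubleton_eq_iff)
  qed
next
  assume "(\<exists>a. p a = Defect \<and> (x = (1,a) \<and> z = (2,a) \<or> x = (2,a) \<and> z = (1,a))) \<or>
   (\<exists>a b. p a = Joined b \<and> (x = (1,a) \<and> z = (1,b) \<or> x = (2,a) \<and> z = (2,b)))"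
  then show "adj2 D x z"
  proof (elim disjE exE)
    fix a assume h: "p a = Defect \<and> (x = (1,a) \<and> z = (2,a) \<or> x = (2,a) \<and> z = (1,a))"
    have "{Lv a, Rv a} \<in> D" unfolding d_of_def using h p_range[of a] by auto
    moreover have "emb2 ` {Lv a, Rv a} = {x,z} \<and> x \<noteq> z" using h by auto
    ultimately show ?thesis unfolding adj2_def by blast
  next
    fix a b assume h: "p a = Joined b \<and> (x = (1,a) \<and> z = (1,b) \<or> x = (2,a) \<and> z = (2,b))"
    have "{Lv a, Lv b} \<in> D" "{Rv a, Rv b} \<in> D" unfolding d_of_def using h p_sym[of a b] by auto
    moreover have "b \<noteq> a" using h p_sym[of a b] by auto
    ultimately have e: "{Lv a, Lv b} \<in> D" "{Rv a, Rv b} \<in> D" "b \<noteq> a" by auto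
    from h have "x = (1,a) \<and> z = (1,b) \<or> x = (2,a) \<and> z = (2,b)" by blast
    then show ?thesis
    proof
      assume xz: "x = (1,a) \<and> z = (1,b)"
      have "emb2 ` {Lv a, Lv b} = {x,z} \<and> x \<noteq> z" using xz e(3) by auto
      then show ?thesis unfolding adj2_def using e(1) by blast
    next
      assume xz: "x = (2,a) \<and> z = (2,b)"
      have "emb2 ` {Rv a, Rv b} = {x,z} \<and> x \<noteq> z" using xz e(3) by auto
      then show ?thesis unfolding adj2_def using e(2) by blast
    qed
  qed
qed

end


context setting begin

lemma rep_simps:
  "rep y p (0,c) = (case mate y (Lv c) of Some (Rv a) \<Rightarrow> (1,a) | _ \<Rightarrow> (0, rm (matL y) c))"
  "rep y p (Suc 0,a) = (1, rm (matR y) a)"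
  "rep y p (2,a) = (if p a = Defect then (1, rm (matR y) a) else (2, rm (matD p) a))"
  unfolding rep_def by (simp_all split: option.splits vert.splits)

lemma verts3_iff: "(k,c) \<in> verts3 n \<longleftrightarrow> k \<in> {0,1,2} \<and> c \<in> {1..n}"
  unfolding verts3_def by auto

lemma adj_rep: assumes "A x z" shows "x \<in> verts3 n \<and> z \<in> verts3 n \<and> rep y p x = rep y p z"
  using assms
proof
  assume "adj1 y x z"
  then obtain u v where uv: "{u,v} \<in> y" "x = emb1 u" "z = emb1 v" using adj1_iff[OF y] by blast
  have m1: "mate y u = Some v" using uv(1) mate_Some[OF y] by blast
  have m: "mate y u = Some v" "mate y v = Some u" using m1 mate_sym[OF m1] by auto
  have vv: "u \<in> verts n" "v \<in> verts n" using rb_edge[OF y uv(1)] by auto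
  show ?thesis
  proof (cases u)
    case (Lv c)
    show ?thesis
    proof (cases v)
      case (Lv c')
      then show ?thesis using \<open>u = Lv c\<close> uv m vv by (simp add: rep_simps verts3_iff matL_def rm_def min.commute)
    next
      case (Rv a)
      then show ?thesis using \<open>u = Lv c\<close> uv m vv by (simp add: rep_simps verts3_iff matR_def rm_def)
    qed
  next
    case (Rv a)
    show ?thesis
    proof (cases v)
      case (Lv c)
      then show ?thesis using \<open>u = Rv a\<close> uv m vv by (simp add: rep_simps verts3_iff matR_def rm_def)
    next
      case (Rv b)
      then show ?thesis using \<open>u = Rv a\<close> uv m vv by (simp add: rep_simps verts3_iff matR_def rm_def min.commute)
    qed
  qed
next
  assume "adj2 D x z"
  then show ?thesis unfolding adj2_iff
  proof (elim disjE exE conjE)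
    fix a assume h: "p a = Defect" "x = (1, a)" "z = (2, a)"
    then show ?thesis using p_range[of a] by (simp add: rep_simps verts3_iff)
  next
    fix a assume h: "p a = Defect" "x = (2, a)" "z = (1, a)"
    then show ?thesis using p_range[of a] by (simp add: rep_simps verts3_iff)
  next
    fix a b assume h: "p a = Joined b" "x = (1, a)" "z = (1, b)"
    have "matR y a = Some b" "matR y b = Some a" using Q1[of a b] Q1[of b a] p_sym[OF h(1)] h
      by (auto simp: matR_def)
    then show ?thesis using p_sym[OF h(1)] h by (simp add: rep_simps verts3_iff rm_def min.commute)
  next
    fix a b assume h: "p a = Joined b" "x = (2, a)" "z = (2, b)"
    have "matD p a = Some b" "matD p b = Some a" using p_sym[OF h(1)] h by (auto simp: matD_def)
    then show ?thesis using p_sym[OF h(1)] h by (simp add: rep_simps verts3_iff rm_def min.commute)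
  qed
qed

lemma conn_def': "conn y D = A\<^sup>*\<^sup>*" unfolding conn_def by simp

lemma A_sym: "A x z \<Longrightarrow> A z x"
  unfolding adj1_def adj2_def by (auto simp: insert_commute)

lemma conn_sym: "conn y D x z \<Longrightarrow> conn y D z x"
  unfolding conn_def'
proof (induction rule: rtranclp_induct)
  case base then show ?case by simp
next
  case (step w z)
  from A_sym[OF step.hyps(2)] step.IH show ?case by (rule converse_rtranclp_into_rtranclp)
qed

lemma A_conn: "A x z \<Longrightarrow> conn y D x z" unfolding conn_def' by auto

lemma conn_trans: "conn y D x w \<Longrightarrow> conn y D w z \<Longrightarrow> conn y D x z"
  unfolding conn_def' by (rule rtranclp_trans)

lemma conn_min: assumes "A (k,a) (k,b)" shows "conn y D (k,a) (k, min a b)"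
  using A_conn[OF assms] by (cases "a \<le> b") (auto simp: min_def conn_def')

lemma path_rep1: "conn y D (1,a) (rep y p (1,a))"
proof (cases "matR y a")
  case None
  then show ?thesis by (simp add: rep_simps rm_def conn_def')
next
  case (Some b)
  then have "{Rv a, Rv b} \<in> y" using mate_Some[OF y] unfolding matR_def by (auto split: option.splits vert.splits)
  then have "A (1,a) (1,b)" using adj1_emb[OF y] by fastforce
  then show ?thesis using conn_min Some by (simp add: rep_simps rm_def)
qed

lemma path_rep: assumes "x \<in> verts3 n" shows "conn y D x (rep y p x)"
proof -
  obtain k c where x: "x = (k,c)" by fastforce
  have k: "k = 0 \<or> k = 1 \<or> k = 2" using assms x by (auto simp: verts3_def)
  show ?thesis
  proof (cases "k = 0")
    case True
    show ?thesis
    proof (cases "mate y (Lv c)")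
      case None
      then show ?thesis using x True by (simp add: rep_simps rm_def matL_def conn_def')
    next
      case (Some w)
      then have e: "{Lv c, w} \<in> y" using mate_Some[OF y] by auto
      show ?thesis
      proof (cases w)
        case (Lv c')
        then have "A (0,c) (0,c')" using adj1_emb[OF y e] by fastforce
        then show ?thesis using conn_min Some Lv x True by (simp add: rep_simps rm_def matL_def)
      next
        case (Rv a)
        then have "A (0,c) (1,a)" using adj1_emb[OF y e] by fastforce
        then show ?thesis using A_conn Some Rv x True by (simp add: rep_simps)
      qed
    qed
  next
    case False
    show ?thesis
    proof (cases "k = 1")
      case True
      then show ?thesis using x path_rep1 by simp
    next
      case False
      then have k2: "k = 2" using k \<open>k \<noteq> 0\<close> by auto
      show ?thesis
      proof (cases "p c")
        case Defect
        then have "A (2,c) (1,c)" unfolding adj2_iff by auto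
        then have "conn y D (2,c) (1,c)" by (rule A_conn)
        then show ?thesis using path_rep1[of c] Defect x k2 conn_trans by (simp add: rep_simps)
      next
        case (Joined b)
        then have "A (2,c) (2,b)" unfolding adj2_iff by auto
        then show ?thesis using conn_min Joined x k2 by (simp add: rep_simps rm_def matD_def)
      next
        case Isol
        then show ?thesis using x k2 by (simp add: rep_simps rm_def matD_def conn_def')
      qed
    qed
  qed
qed

lemma conn_iff: "conn y D x z \<longleftrightarrow> x = z \<or> (x \<in> verts3 n \<and> z \<in> verts3 n \<and> rep y p x = rep y p z)"
proof
  assume "conn y D x z"
  then show "x = z \<or> (x \<in> verts3 n \<and> z \<in> verts3 n \<and> rep y p x = rep y p z)"
    unfolding conn_def'
  proof (induction rule: rtranclp_induct)
    case base then show ?case by simp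
  next
    case (step w z)
    then show ?case using adj_rep[OF step(2)] by auto
  qed
next
  assume "x = z \<or> (x \<in> verts3 n \<and> z \<in> verts3 n \<and> rep y p x = rep y p z)"
  then show "conn y D x z"
  proof
    assume "x = z" then show ?thesis by (simp add: conn_def')
  next
    assume h: "x \<in> verts3 n \<and> z \<in> verts3 n \<and> rep y p x = rep y p z"
    then show ?thesis using path_rep[of x] path_rep[of z] conn_sym conn_trans by metis
  qed
qed

end


context setting begin

abbreviation K where "K x \<equiv> {z \<in> verts3 n. rep y p z = rep y p x}"

lemma rep1: "rep y p (1,a) = (1, rm (matR y) a)" "rep y p (Suc 0,a) = (1, rm (matR y) a)"
  unfolding rep_def by simp_all
lemma rep2: "rep y p (2,a) = (if p a = Defect then (1, rm (matR y) a) else (2, rm (matD p) a))"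
  unfolding rep_def by simp
lemma rep0: "rep y p (0,c) = (case mate y (Lv c) of Some (Rv a) \<Rightarrow> (1,a) | _ \<Rightarrow> (0, rm (matL y) c))"
  unfolding rep_def by (simp split: option.splits vert.splits)

lemma rep0_cases: "(\<exists>a. mate y (Lv c) = Some (Rv a) \<and> rep y p (0,c) = (1,a)) \<or>
   ((\<forall>a. mate y (Lv c) \<noteq> Some (Rv a)) \<and> rep y p (0,c) = (0, rm (matL y) c))"
  unfolding rep0 by (auto split: option.splits vert.splits)

lemma matR_Some: "matR y a = Some b \<longleftrightarrow> mate y (Rv a) = Some (Rv b)"
  unfolding matR_def by (auto split: option.splits vert.splits)
lemma matL_Some: "matL y a = Some b \<longleftrightarrow> mate y (Lv a) = Some (Lv b)"
  unfolding matL_def by (auto split: option.splits vert.splits)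
lemma matD_Some: "matD p a = Some b \<longleftrightarrow> p a = Joined b"
  unfolding matD_def by (auto split: lstate.splits)

lemma matR_None_Lv: "mate y (Rv a) = Some (Lv c) \<Longrightarrow> matR y a = None"
  unfolding matR_def by simp

lemma rmR_eq: "rm (matR y) c = rm (matR y) a \<Longrightarrow> c = a \<or> matR y a = Some c"
  by (rule rm_eq[OF MR_sym])
lemma rmL_eq: "rm (matL y) c = rm (matL y) a \<Longrightarrow> c = a \<or> matL y a = Some c"
  by (rule rm_eq[OF matL_sym])
lemma rmD_eq: "rm (matD p) c = rm (matD p) a \<Longrightarrow> c = a \<or> matD p a = Some c"
  by (rule rm_eq[OF MD_sym])

lemma rm_None: "M a = None \<Longrightarrow> rm M a = a" unfolding rm_def by simp

lemma K_joined: assumes j: "p a = Joined b" shows "K (1,a) = {(1,a),(1,b)}"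
proof -
  have ps: "p b = Joined a" "b \<noteq> a" "a \<in> {1..n}" "b \<in> {1..n}" using p_sym[OF j] by auto
  have ma: "matR y a = Some b" "matR y b = Some a" using Q1[OF j] Q1[OF ps(1)] matR_Some by auto
  have r: "rep y p (1,b) = rep y p (1,a)" using ma by (simp add: rep1 rm_def min.commute)
  show ?thesis
  proof
    show "{(1,a),(1,b)} \<subseteq> K (1,a)" using r ps by (auto simp: verts3_iff)
  next
    show "K (1,a) \<subseteq> {(1,a),(1,b)}"
    proof
      fix z assume z: "z \<in> K (1,a)"
      obtain k c where zkc: "z = (k,c)" by fastforce
      have k: "k = 0 \<or> k = 1 \<or> k = 2" and e: "rep y p (k,c) = rep y p (1,a)"
        using z zkc by (auto simp: verts3_iff)
      show "z \<in> {(1,a),(1,b)}"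
      proof -
        {assume k0: "k = 0"
          from rep0_cases[of c] have False
          proof
            assume "\<exists>a0. mate y (Lv c) = Some (Rv a0) \<and> rep y p (0, c) = (1, a0)"
            then obtain a0 where a0: "mate y (Lv c) = Some (Rv a0)" "rep y p (0, c) = (1, a0)" by blast
            then have "matR y a0 = None" using mate_sym[OF a0(1)] matR_None_Lv by blast
            moreover have "rm (matR y) a0 = a0" using calculation rm_None by metis
            moreover have "rm (matR y) a0 = rm (matR y) a" using a0 e k0 calculation by (simp add: rep1)
            ultimately show False using rmR_eq[of a0 a] ma by auto
          next
            assume "(\<forall>a. mate y (Lv c) \<noteq> Some (Rv a)) \<and> rep y p (0, c) = (0, rm (matL y) c)"
            then show False using e k0 by (simp add: rep1)
          qed}
        moreover
        {assume k1: "k = 1"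
          then have "rm (matR y) c = rm (matR y) a" using e by (simp add: rep1)
          then have "c = a \<or> c = b" using rmR_eq[of c a] ma by auto
          then have ?thesis using zkc k1 by auto}
        moreover
        {assume k2: "k = 2"
          have False
          proof (cases "p c = Defect")
            case True
            then have "rm (matR y) c = rm (matR y) a" using e k2 by (simp add: rep1 rep2)
            then have "c = a \<or> c = b" using rmR_eq[of c a] ma by auto
            then show False using True j ps by auto
          next
            case False
            then show False using e k2 by (simp add: rep1 rep2)
          qed}
        ultimately show ?thesis using k by blast
      qed
    qed
  qed
qed

lemma K_isol: assumes j: "p a = Isol" "a \<in> {1..n}" shows "K (1,a) = {(1,a)}"
proof -
  have m: "mate y (Rv a) = None" using Q2[OF j(1)] .
  then have ma: "matR y a = None" unfolding matR_def by simp
  show ?thesis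
  proof
    show "{(1,a)} \<subseteq> K (1,a)" using j by (auto simp: verts3_iff)
  next
    show "K (1,a) \<subseteq> {(1,a)}"
    proof
      fix z assume z: "z \<in> K (1,a)"
      obtain k c where zkc: "z = (k,c)" by fastforce
      have k: "k = 0 \<or> k = 1 \<or> k = 2" and e: "rep y p (k,c) = rep y p (1,a)"
        using z zkc by (auto simp: verts3_iff)
      show "z \<in> {(1,a)}"
      proof -
        {assume k0: "k = 0"
          from rep0_cases[of c] have False
          proof
            assume "\<exists>a0. mate y (Lv c) = Some (Rv a0) \<and> rep y p (0, c) = (1, a0)"
            then obtain a0 where a0: "mate y (Lv c) = Some (Rv a0)" "rep y p (0, c) = (1, a0)" by blast
            have "a0 = a" using a0 e k0 ma rm_None[of "matR y" a] by (simp add: rep1)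
            then show False using mate_sym[OF a0(1)] m by simp
          next
            assume "(\<forall>a. mate y (Lv c) \<noteq> Some (Rv a)) \<and> rep y p (0, c) = (0, rm (matL y) c)"
            then show False using e k0 by (simp add: rep1)
          qed}
        moreover
        {assume k1: "k = 1"
          then have "rm (matR y) c = rm (matR y) a" using e by (simp add: rep1)
          then have "c = a" using rmR_eq[of c a] ma by auto
          then have ?thesis using zkc k1 by auto}
        moreover
        {assume k2: "k = 2"
          have False
          proof (cases "p c = Defect")
            case True
            then have "rm (matR y) c = rm (matR y) a" using e k2 by (simp add: rep1 rep2)
            then have "c = a" using rmR_eq[of c a] ma by auto
            then show False using True j by auto
          next
            case False
            then show False using e k2 by (simp add: rep1 rep2)
          qed}
        ultimately show ?thesis using k by blast
      qed
    qed
  qed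
qed

lemma K_defect: "p a = Defect \<Longrightarrow> (2,a) \<in> K (1,a)"
  using p_range[of a] by (simp add: rep1 rep2 verts3_iff)

lemma joined_deg: assumes j: "p a = Joined b"
  shows "(\<exists>w. adj1 y (1,a) w) \<and> (\<exists>w. adj2 D (1,a) w)"
proof
  have "{Rv a, Rv b} \<in> y" using Q1[OF j] mate_Some[OF y] by blast
  then have "adj1 y (emb1 (Rv a)) (emb1 (Rv b))" by (rule adj1_emb[OF y])
  then show "\<exists>w. adj1 y (1,a) w" by auto
  show "\<exists>w. adj2 D (1,a) w" using j unfolding adj2_iff by blast
qed

lemma comps: "components n y D = K ` verts3 n"
proof -
  have h: "{z \<in> verts3 n. conn y D x z} = K x" if "x \<in> verts3 n" for x
    using that by (auto simp: conn_iff)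
  show ?thesis
  proof (rule set_eqI)
    fix C
    have "C \<in> components n y D \<longleftrightarrow> (\<exists>x. C = {z \<in> verts3 n. conn y D x z} \<and> x \<in> verts3 n)"
      unfolding components_def by blast
    also have "\<dots> \<longleftrightarrow> (\<exists>x. C = K x \<and> x \<in> verts3 n)" 
    proof
      assume "\<exists>x. C = {z \<in> verts3 n. conn y D x z} \<and> x \<in> verts3 n"
      then obtain x where "C = {z \<in> verts3 n. conn y D x z}" "x \<in> verts3 n" by blast
      then show "\<exists>x. C = K x \<and> x \<in> verts3 n" using h[of x] by blast
    next
      assume "\<exists>x. C = K x \<and> x \<in> verts3 n"
      then obtain x where "C = K x" "x \<in> verts3 n" by blast
      then show "\<exists>x. C = {z \<in> verts3 n. conn y D x z} \<and> x \<in> verts3 n" using h[of x] by blast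
    qed
    also have "\<dots> \<longleftrightarrow> C \<in> K ` verts3 n" by blast
    finally show "C \<in> components n y D \<longleftrightarrow> C \<in> K ` verts3 n" .
  qed
qed

lemma mid_x: assumes "K x \<subseteq> middle n" "x \<in> verts3 n" shows "\<exists>a. x = (1,a) \<and> a \<in> {1..n}"
proof -
  have "x \<in> K x" using assms by simp
  then show ?thesis using assms unfolding middle_def by auto
qed

lemma loops_eq: "loops_mid n y D = (\<lambda>S. Pair 1 ` S) ` np_edges n p"
proof
  show "loops_mid n y D \<subseteq> (\<lambda>S. Pair 1 ` S) ` np_edges n p"
  proof
    fix C assume C: "C \<in> loops_mid n y D"
    then obtain x where x: "x \<in> verts3 n" "C = K x" unfolding loops_mid_def comps by blast
    have sub: "K x \<subseteq> middle n" and deg: "\<forall>z\<in>K x. (\<exists>w. adj1 y z w) \<and> (\<exists>w. adj2 D z w)"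
      using C x unfolding loops_mid_def by auto
    obtain a where a: "x = (1,a)" "a \<in> {1..n}" using mid_x[OF sub x(1)] by blast
    have "x \<in> K x" using x by simp
    then obtain w where "adj2 D (1,a) w" using deg a by blast
    then have "p a = Defect \<or> (\<exists>b. p a = Joined b)" unfolding adj2_iff by auto
    then show "C \<in> (\<lambda>S. Pair 1 ` S) ` np_edges n p"
    proof
      assume "p a = Defect"
      then have "(2,a) \<in> K x" using K_defect a by simp
      then show ?thesis using sub unfolding middle_def by auto
    next
      assume "\<exists>b. p a = Joined b"
      then obtain b where b: "p a = Joined b" by blast
      have "C = Pair 1 ` {a,b}" using K_joined[OF b] x a by simp
      moreover have "{a,b} \<in> np_edges n p" unfolding np_edges_def using a b by blast
      ultimately show ?thesis by blast
    qed
  qed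
next
  show "(\<lambda>S. Pair 1 ` S) ` np_edges n p \<subseteq> loops_mid n y D"
  proof
    fix C :: "(nat \<times> nat) set" assume "C \<in> (\<lambda>S. Pair 1 ` S) ` np_edges n p"
    then obtain a b where ab: "a \<in> {1..n}" "p a = Joined b" "C = Pair 1 ` {a,b}"
      unfolding np_edges_def by blast
    have ps: "p b = Joined a" "b \<in> {1..n}" using p_sym[OF ab(2)] by auto
    have CK: "C = K (1,a)" using K_joined[OF ab(2)] ab by simp
    have "C \<in> components n y D" unfolding comps CK using ab by (auto simp: verts3_iff)
    moreover have "C \<subseteq> middle n" using ab ps unfolding middle_def by auto
    moreover have "\<forall>z\<in>C. (\<exists>w. adj1 y z w) \<and> (\<exists>w. adj2 D z w)"
      using ab joined_deg[OF ab(2)] joined_deg[OF ps(1)] by auto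
    ultimately show "C \<in> loops_mid n y D" unfolding loops_mid_def by blast
  qed
qed

lemma other_eq: "other_mid n y D = (\<lambda>a. {(1,a)}) ` isolated n p"
proof
  show "other_mid n y D \<subseteq> (\<lambda>a. {(1,a)}) ` isolated n p"
  proof
    fix C assume C: "C \<in> other_mid n y D"
    then obtain x where x: "x \<in> verts3 n" "C = K x" unfolding other_mid_def comps by blast
    have sub: "K x \<subseteq> middle n" and deg: "\<not> (\<forall>z\<in>K x. (\<exists>w. adj1 y z w) \<and> (\<exists>w. adj2 D z w))"
      using C x unfolding other_mid_def by auto
    obtain a where a: "x = (1,a)" "a \<in> {1..n}" using mid_x[OF sub x(1)] by blast
    show "C \<in> (\<lambda>a. {(1,a)}) ` isolated n p"
    proof (cases "p a")
      case Defect
      then have "(2,a) \<in> K x" using K_defect a by simp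
      then show ?thesis using sub unfolding middle_def by auto
    next
      case (Joined b)
      have ps: "p b = Joined a" using p_sym[OF Joined] by auto
      have "K x = {(1,a),(1,b)}" using K_joined[OF Joined] a by simp
      then show ?thesis using deg joined_deg[OF Joined] joined_deg[OF ps] by auto
    next
      case Isol
      then have "C = {(1,a)}" using K_isol[OF Isol a(2)] x a by simp
      moreover have "a \<in> isolated n p" unfolding isolated_def using a Isol by simp
      ultimately show ?thesis by blast
    qed
  qed
next
  show "(\<lambda>a. {(1,a)}) ` isolated n p \<subseteq> other_mid n y D"
  proof
    fix C :: "(nat \<times> nat) set" assume "C \<in> (\<lambda>a. {(1,a)}) ` isolated n p"
    then obtain a where a: "a \<in> {1..n}" "p a = Isol" "C = {(1,a)}"
      unfolding isolated_def by blast
    have CK: "C = K (1,a)" using K_isol[OF a(2) a(1)] a by simp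
    have "C \<in> components n y D" unfolding comps CK using a by (auto simp: verts3_iff)
    moreover have "C \<subseteq> middle n" using a unfolding middle_def by auto
    moreover have "\<not> (\<exists>w. adj2 D (1,a) w)" using a unfolding adj2_iff by auto
    ultimately show "C \<in> other_mid n y D" unfolding other_mid_def using a by blast
  qed
qed

end


context setting begin

lemma rep_LL: assumes "c \<noteq> c'" "rep y p (0,c) = rep y p (0,c')" shows "{Lv c, Lv c'} \<in> y"
proof -
  from rep0_cases[of c] rep0_cases[of c'] assms(2) consider
    (RR) a a' where "mate y (Lv c) = Some (Rv a)" "mate y (Lv c') = Some (Rv a')" "a = a'"
  | (LL) "rm (matL y) c = rm (matL y) c'"
    by auto
  then show ?thesis
  proof cases
    case RR
    then have "mate y (Rv a) = Some (Lv c)" "mate y (Rv a) = Some (Lv c')"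
      using mate_sym[OF RR(1)] mate_sym[OF RR(2)] by auto
    then show ?thesis using assms(1) by simp
  next
    case LL
    then have "c = c' \<or> matL y c' = Some c" using rmL_eq by blast
    then have "mate y (Lv c') = Some (Lv c)" using assms(1) matL_Some by blast
    then show ?thesis using mate_Some[OF y] by (simp add: insert_commute)
  qed
qed

lemma rep_LR: assumes "rep y p (0,c) = rep y p (2,a)" shows "{Lv c, Rv a} \<in> y"
proof -
  from rep0_cases[of c] assms obtain a0 where a0: "mate y (Lv c) = Some (Rv a0)" "p a = Defect"
      "a0 = rm (matR y) a"
    by (auto simp: rep2 split: if_splits)
  have "matR y a0 = None" using mate_sym[OF a0(1)] matR_None_Lv by blast
  then have "rm (matR y) a0 = a0" by (rule rm_None)
  then have "rm (matR y) a0 = rm (matR y) a" using a0(3) by simp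
  then have "a0 = a \<or> matR y a = Some a0" by (rule rmR_eq)
  moreover have "matR y a \<noteq> Some a0"
  proof
    assume "matR y a = Some a0"
    then have "matR y a0 = Some a" by (rule MR_sym)
    then show False using \<open>matR y a0 = None\<close> by simp
  qed
  ultimately have "a0 = a" by blast
  then show ?thesis using a0(1) mate_Some[OF y] by simp
qed

lemma rep_RR: assumes "a \<noteq> b" "rep y p (2,a) = rep y p (2,b)" shows "{Rv a, Rv b} \<in> y"
proof (cases "p a = Defect")
  case True
  then have "p b = Defect" "rm (matR y) a = rm (matR y) b" using assms(2) by (auto simp: rep2 split: if_splits)
  then have "matR y b = Some a" using rmR_eq assms(1) by blast
  then have "mate y (Rv b) = Some (Rv a)" using matR_Some by blast
  then show ?thesis using mate_Some[OF y] by (simp add: insert_commute)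
next
  case False
  then have "p b \<noteq> Defect" "rm (matD p) a = rm (matD p) b" using assms(2) by (auto simp: rep2 split: if_splits)
  then have "matD p b = Some a" using rmD_eq assms(1) by blast
  then have "p b = Joined a" using matD_Some by blast
  then have "mate y (Rv b) = Some (Rv a)" using Q1 by blast
  then show ?thesis using mate_Some[OF y] by (simp add: insert_commute)
qed

lemma conn_edge: assumes e: "{u,v} \<in> y" shows "conn y D (outer u) (outer v)"
proof -
  have A1: "A (emb1 u) (emb1 v)" using adj1_emb[OF y e] by simp
  have m: "mate y u = Some v" using mate_Some[OF y] e by blast
  have D12: "A (1,a) (2,a)" if "p a = Defect" for a using that unfolding adj2_iff by auto
  show ?thesis
  proof (cases u)
    case (Lv c)
    show ?thesis
    proof (cases v)
      case (Lv c')
      then show ?thesis using A1 \<open>u = Lv c\<close> A_conn by simp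
    next
      case (Rv a)
      have "p a = Defect" using Q3 mate_sym[OF m] Rv \<open>u = Lv c\<close> by simp
      then have "conn y D (1,a) (2,a)" using D12 A_conn by blast
      moreover have "conn y D (0,c) (1,a)" using A1 \<open>u = Lv c\<close> Rv A_conn by simp
      ultimately show ?thesis using conn_trans \<open>u = Lv c\<close> Rv by simp
    qed
  next
    case (Rv a)
    show ?thesis
    proof (cases v)
      case (Lv c)
      have "p a = Defect" using Q3 m Lv \<open>u = Rv a\<close> by simp
      then have "conn y D (1,a) (2,a)" using D12 A_conn by blast
      moreover have "conn y D (0,c) (1,a)" using A1 \<open>u = Rv a\<close> Lv A_conn A_sym by simp
      ultimately have "conn y D (0,c) (2,a)" using conn_trans by blast
      then show ?thesis using conn_sym \<open>u = Rv a\<close> Lv by simp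
    next
      case (Rv b)
      have "p a = Joined b \<or> (p a = Defect \<and> p b = Defect)" using Q4 m Rv \<open>u = Rv a\<close> by simp
      then show ?thesis
      proof
        assume "p a = Joined b"
        then have "A (2,a) (2,b)" unfolding adj2_iff by auto
        then show ?thesis using A_conn \<open>u = Rv a\<close> Rv by simp
      next
        assume "p a = Defect \<and> p b = Defect"
        then have "conn y D (1,a) (2,a)" "conn y D (1,b) (2,b)" using D12 A_conn by blast+
        moreover have "conn y D (1,a) (1,b)" using A1 \<open>u = Rv a\<close> Rv A_conn by simp
        ultimately show ?thesis using conn_trans conn_sym \<open>u = Rv a\<close> Rv by (metis outer.simps(2))
      qed
    qed
  qed
qed

lemma comp_eq: "comp_diagram n y D = y"
proof
  show "comp_diagram n y D \<subseteq> y"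
  proof
    fix e assume "e \<in> comp_diagram n y D"
    then obtain u v where uv: "e = {u,v}" "u \<in> verts n" "v \<in> verts n" "u \<noteq> v"
      "conn y D (outer u) (outer v)" unfolding comp_diagram_def by blast
    have "outer u \<noteq> outer v" using uv(4) outer_inj by blast
    then have r: "rep y p (outer u) = rep y p (outer v)" using uv(5) conn_iff by blast
    show "e \<in> y"
    proof (cases u)
      case (Lv c)
      show ?thesis
      proof (cases v)
        case (Lv c')
        then show ?thesis using rep_LL[of c c'] r uv \<open>u = Lv c\<close> by simp
      next
        case (Rv a)
        then show ?thesis using rep_LR[of c a] r uv \<open>u = Lv c\<close> by simp
      qed
    next
      case (Rv a)
      show ?thesis
      proof (cases v)
        case (Lv c)
        then show ?thesis using rep_LR[of c a] r uv \<open>u = Rv a\<close> by (simp add: insert_commute)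
      next
        case (Rv b)
        then show ?thesis using rep_RR[of a b] r uv \<open>u = Rv a\<close> by simp
      qed
    qed
  qed
next
  show "y \<subseteq> comp_diagram n y D"
  proof
    fix e assume e: "e \<in> y"
    have h: "\<forall>e\<in>y. \<exists>u v. e = {u, v} \<and> u \<noteq> v \<and> u \<in> verts n \<and> v \<in> verts n"
      using y unfolding rb_diagram_def by (rule conjunct1)
    obtain u v where uv: "e = {u,v}" "u \<noteq> v" "u \<in> verts n" "v \<in> verts n" using bspec[OF h e] by blast
    have "conn y D (outer u) (outer v)" using conn_edge e uv by simp
    then show "e \<in> comp_diagram n y D" unfolding comp_diagram_def using uv by blast
  qed
qed

end

theorem lemma7p5:
  fixes n i :: nat and p :: "nat \<Rightarrow> lstate" and y :: "vert set set"
    and \<delta> \<epsilon> :: "'k::comm_ring_1"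
  assumes "0 < n"
    and "p \<in> P n i"
    and "y \<in> J n p"
  shows "rb_prod n \<delta> \<epsilon> y (d_of n p)
           = basis_elt y (\<delta> ^ card (np_edges n p) * \<epsilon> ^ card (isolated n p))"
proof -
  obtain d0 where d0: "rb_diagram n d0" "p = rls d0" using assms(2) unfolding P_def by blast
  have yy: "rb_diagram n y" "(\<lambda>q q'. splice q q' \<or> deletion q q')\<^sup>*\<^sup>* p (rls y)"
    using assms(3) unfolding J_def by blast+
  interpret S: setting n y d0 p
    using d0 yy Inv_rtc by unfold_locales auto
  have c1: "card (loops_mid n y (d_of n p)) = card (np_edges n p)"
  proof -
    have "inj_on (\<lambda>S. Pair (1::nat) ` S) (np_edges n p)"
    proof (rule inj_onI)
      fix a b :: "nat set" assume h: "Pair (1::nat) ` a = Pair 1 ` b"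
      have "inj (Pair (1::nat))" by (rule injI) simp
      then show "a = b" using h inj_image_eq_iff by blast
    qed
    then show ?thesis unfolding S.loops_eq by (rule card_image)
  qed
  have c2: "card (other_mid n y (d_of n p)) = card (isolated n p)"
  proof -
    have "inj_on (\<lambda>a. {(1::nat, a)}) (isolated n p)"
      by (rule inj_onI) simp
    then show ?thesis unfolding S.other_eq by (rule card_image)
  qed
  show ?thesis unfolding rb_prod_def basis_elt_def S.comp_eq c1 c2 ..
qed

end
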